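(* Let $p>1$ and $N\ge 2m-1$. For almost all $(A,y)\in\mathbb R^{m\times N}\times\mathbb R^m$, the unique optimal solution $x^*$ of $\min_{x\in\mathbb R^N}\|x\|_p$ subject to $Ax=y$ satisfies $|\mathrm{supp}(x^* )|=N$.
   Context: $\|x\|_p:=(\sum_i|x_i|^p)^{1/p}$; $\mathrm{supp}(x)=\{i:x_i\ne0\}$. "For almost all" means outside a set of Lebesgue measure zero. *)

theory Defs
  imports "HOL-Analysis.Analysis"
begin

text \<open>The p-norm on real vectors indexed by a finite type.\<close>
definition pnorm :: "real \<Rightarrow> real ^ 'n \<Rightarrow> real" where
  "pnorm p x = (\<Sum>i\<in>UNIV. \<bar>x $ i\<bar> powr p) powr (1 / p)"

text \<open>Support of a vector.\<close>
definition supp :: "real ^ 'n \<Rightarrow> 'n set" where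
  "supp x = {i. x $ i \<noteq> 0}"

text \<open>x is an optimal solution of  min ||x||_p  subject to  A x = y.\<close>
definition lp_optimal :: "real \<Rightarrow> real ^ 'n ^ 'm \<Rightarrow> real ^ 'm \<Rightarrow> real ^ 'n \<Rightarrow> bool" where
  "lp_optimal p A y x \<longleftrightarrow>
     A *v x = y \<and> (\<forall>z. A *v z = y \<longrightarrow> pnorm p x \<le> pnorm p z)"

end

theory Submission
  imports Defs
begin

definition sp :: "real \<Rightarrow> real \<Rightarrow> real" where
  "sp b u = sgn u * \<bar>u\<bar> powr b"

lemma sp_0[simp]: "sp b 0 = 0" by (simp add: sp_def)

lemma abs_sp: "\<bar>sp b u\<bar> = \<bar>u\<bar> powr b"
  by (auto simp: sp_def abs_mult sgn_if)

lemma sgn_sp: "sgn (sp b u) = sgn u"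
  by (auto simp: sp_def sgn_mult sgn_if)

lemma sp_sp: "sp b (sp c u) = sp (c * b) u"
  by (simp add: sp_def sgn_sp[unfolded sp_def] abs_sp[unfolded sp_def] powr_powr)

lemma sp_1: "sp 1 u = u"
  by (auto simp: sp_def sgn_if)

lemma sp_eq0: "sp b u = 0 \<longleftrightarrow> u = 0"
  by (auto simp: sp_def sgn_if)

lemma sp_mono:
  assumes "b > 0" "u < v" shows "sp b u < sp b v"
proof -
  consider "0 \<le> u" | "u < 0" "0 \<le> v" | "v < 0" by linarith
  then show ?thesis
  proof cases
    case 1 then show ?thesis using assms by (auto simp: sp_def sgn_if powr_less_mono2)
  next
    case 2
    have "sp b u < 0" using 2 by (simp add: sp_def)
    moreover have "0 \<le> sp b v" using 2 by (simp add: sp_def sgn_if)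
    ultimately show ?thesis by linarith
  next
    case 3 then show ?thesis using assms by (auto simp: sp_def sgn_if powr_less_mono2)
  qed
qed

lemma sp_mono_prod:
  assumes "b > 0" shows "(sp b u - sp b v) * (u - v) \<ge> 0"
  using sp_mono[OF assms, of u v] sp_mono[OF assms, of v u]
  by (cases u v rule: linorder_cases) (auto simp: mult_nonneg_nonneg mult_nonpos_nonpos)

lemma sp_mono_prod_eq:
  assumes "b > 0" "(sp b u - sp b v) * (u - v) = 0" shows "u = v"
  using sp_mono[OF assms(1), of u v] sp_mono[OF assms(1), of v u] assms(2)
  by (cases u v rule: linorder_cases) auto

lemma absp_deriv_nz:
  assumes "s \<noteq> 0"
  shows "((\<lambda>x. \<bar>x\<bar> powr c) has_real_derivative c * sp (c - 1) s) (at s)"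
proof (cases "s > 0")
  case True
  have "((\<lambda>x. x powr c) has_real_derivative c * s powr (c - 1)) (at s)"
    using has_real_derivative_powr[OF True] .
  then have "((\<lambda>x. \<bar>x\<bar> powr c) has_real_derivative c * s powr (c - 1)) (at s)"
    by (rule has_field_derivative_transform_within_open[where S="{0<..}"]) (use True in auto)
  then show ?thesis using True by (simp add: sp_def)
next
  case False
  then have neg: "s < 0" using assms by auto
  have "((\<lambda>x. (-x) powr c) has_real_derivative c * (-s) powr (c - 1) * (-1)) (at s)"
    using neg by (auto intro!: derivative_eq_intros)
  then have "((\<lambda>x. \<bar>x\<bar> powr c) has_real_derivative c * (-s) powr (c - 1) * (-1)) (at s)"
    by (rule has_field_derivative_transform_within_open[where S="{..<0}"]) (use neg in auto)
  then show ?thesis using neg by (simp add: sp_def)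
qed

lemma absp_deriv0:
  assumes "c > 1"
  shows "((\<lambda>x. \<bar>x\<bar> powr c) has_real_derivative 0) (at 0)"
  unfolding DERIV_def
proof -
  have "((\<lambda>h. \<bar>h\<bar> powr (c - 1)) \<longlongrightarrow> 0 powr (c - 1)) (at 0)"
    using assms by (intro tendsto_powr') (auto intro!: tendsto_eq_intros)
  then have t: "((\<lambda>h. \<bar>h\<bar> powr (c - 1)) \<longlongrightarrow> 0) (at (0::real))" by simp
  have "((\<lambda>h. \<bar>(\<bar>0 + h\<bar> powr c - \<bar>0\<bar> powr c) / h\<bar>) \<longlongrightarrow> 0) (at (0::real))"
  proof (rule Lim_transform_eventually[OF t])
    show "\<forall>\<^sub>F h in at 0. \<bar>h\<bar> powr (c - 1) = \<bar>(\<bar>0 + h\<bar> powr c - \<bar>0\<bar> powr c) / h\<bar>"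
      unfolding eventually_at_filter
      by (auto simp: powr_diff abs_divide)
  qed
  then show "((\<lambda>h. (\<bar>0 + h\<bar> powr c - \<bar>0\<bar> powr c) / h) \<longlongrightarrow> 0) (at (0::real))"
    by (simp only: tendsto_rabs_zero_iff)
qed

lemma absp_deriv:
  assumes "c > 1"
  shows "((\<lambda>x. \<bar>x\<bar> powr c) has_real_derivative c * sp (c - 1) s) (at s)"
  using absp_deriv_nz[of s c] absp_deriv0[OF assms] by (cases "s = 0") auto

lemma sp_deriv:
  assumes "b \<ge> 1"
  shows "\<exists>D. (sp b has_real_derivative D) (at s)"
proof (cases "b = 1")
  case True
  have "sp b = (\<lambda>u. u)" using True by (auto simp: sp_1)
  then show ?thesis by (auto intro!: exI[of _ 1])
next
  case False
  then have b1: "b > 1" using assms by auto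
  have eq: "sp b = (\<lambda>u. u * \<bar>u\<bar> powr (b - 1))"
  proof
    fix u show "sp b u = u * \<bar>u\<bar> powr (b - 1)"
      by (cases "u = 0") (auto simp: sp_def sgn_if powr_diff)
  qed
  show ?thesis
  proof (cases "s = 0")
    case False
    show ?thesis unfolding eq
      using DERIV_mult[OF DERIV_ident absp_deriv_nz[OF False]] by blast
  next
    case True
    have "((\<lambda>h. \<bar>h\<bar> powr (b - 1)) \<longlongrightarrow> 0 powr (b - 1)) (at 0)"
      using b1 by (intro tendsto_powr') (auto intro!: tendsto_eq_intros)
    then have t: "((\<lambda>h. \<bar>h\<bar> powr (b - 1)) \<longlongrightarrow> 0) (at (0::real))" by simp
    have "((\<lambda>h. (sp b (0 + h) - sp b 0) / h) \<longlongrightarrow> 0) (at 0)"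
    proof (rule Lim_transform_eventually[OF t])
      show "\<forall>\<^sub>F h in at 0. \<bar>h\<bar> powr (b - 1) = (sp b (0 + h) - sp b 0) / h"
        unfolding eventually_at_filter eq by auto
    qed
    then show ?thesis using True unfolding DERIV_def by blast
  qed
qed

definition FF :: "real \<Rightarrow> real ^ 'n \<Rightarrow> real" where
  "FF p x = (\<Sum>i\<in>UNIV. \<bar>x $ i\<bar> powr p)"

lemma FF_nonneg: "FF p x \<ge> 0" by (simp add: FF_def sum_nonneg)

lemma powr_le_iff_base:
  fixes a b r :: real
  assumes "a \<ge> 0" "b \<ge> 0" "r > 0"
  shows "a powr r \<le> b powr r \<longleftrightarrow> a \<le> b"
proof
  assume h: "a powr r \<le> b powr r"
  have "(a powr r) powr (1/r) \<le> (b powr r) powr (1/r)"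
    by (rule powr_mono2) (use assms h in auto)
  moreover have "(a powr r) powr (1/r) = a" "(b powr r) powr (1/r) = b"
    using assms by (simp_all add: powr_powr)
  ultimately show "a \<le> b" by simp
qed (use assms in \<open>auto intro: powr_mono2\<close>)

lemma lp_optimal_iff:
  assumes "p > 0"
  shows "lp_optimal p A y x \<longleftrightarrow> A *v x = y \<and> (\<forall>z. A *v z = y \<longrightarrow> FF p x \<le> FF p z)"
proof -
  have h: "\<And>z. FF p x powr (1/p) \<le> FF p z powr (1/p) \<longleftrightarrow> FF p x \<le> FF p z"
    by (rule powr_le_iff_base) (auto simp: FF_nonneg assms)
  show ?thesis
    unfolding lp_optimal_def pnorm_def FF_def[symmetric] h by simp
qed

lemma first_order:
  fixes A :: "real ^ 'n ^ 'm"
  assumes p: "p > 1" and opt: "\<forall>z. A *v z = A *v x \<longrightarrow> FF p x \<le> FF p z"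
    and v: "A *v v = 0"
  shows "(\<Sum>j\<in>UNIV. sp (p - 1) (x $ j) * v $ j) = 0"
proof -
  let ?g = "\<lambda>t. (\<Sum>j\<in>UNIV. \<bar>x $ j + t * v $ j\<bar> powr p)"
  have d: "(?g has_real_derivative (\<Sum>j\<in>UNIV. p * sp (p - 1) (x $ j) * v $ j)) (at 0)"
  proof (rule DERIV_sum)
    fix j
    have "((\<lambda>t. x $ j + t * v $ j) has_real_derivative v $ j) (at 0)"
      by (auto intro!: derivative_eq_intros)
    from DERIV_chain2[OF absp_deriv[OF p, of "x $ j + 0 * v $ j"] this]
    show "((\<lambda>t. \<bar>x $ j + t * v $ j\<bar> powr p) has_real_derivative p * sp (p - 1) (x $ j) * v $ j) (at 0)"
      by simp
  qed
  have "\<forall>t. \<bar>0 - t\<bar> < 1 \<longrightarrow> ?g 0 \<le> ?g t"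
  proof (intro allI impI)
    fix t :: real
    have "A *v (x + t *\<^sub>R v) = A *v x"
      by (simp add: matrix_vector_right_distrib matrix_vector_mult_scaleR v)
    then have "FF p x \<le> FF p (x + t *\<^sub>R v)" using opt by blast
    then show "?g 0 \<le> ?g t" by (simp add: FF_def)
  qed
  from DERIV_local_min[OF d zero_less_one this]
  have "(\<Sum>j\<in>UNIV. p * sp (p - 1) (x $ j) * v $ j) = 0" .
  then have "p * (\<Sum>j\<in>UNIV. sp (p - 1) (x $ j) * v $ j) = 0"
    by (simp add: sum_distrib_left mult.assoc)
  then show ?thesis using p by simp
qed

lemma kkt_range:
  fixes A :: "real ^ 'n ^ 'm"
  assumes "\<forall>v. A *v v = 0 \<longrightarrow> w \<bullet> v = 0"
  shows "\<exists>l. w = transpose A *v l"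
proof -
  let ?S = "range (\<lambda>l. transpose A *v l)"
  have sub: "subspace ?S"
    by (rule linear_subspace_image[OF matrix_vector_mul_linear subspace_UNIV])
  obtain a z where a: "a \<in> span ?S" and z: "\<And>u. u \<in> span ?S \<Longrightarrow> orthogonal z u"
    and w: "w = a + z"
    using orthogonal_subspace_decomp_exists by blast
  have aS: "a \<in> ?S" using a span_eq_iff[THEN iffD2, OF sub] by blast
  have "z \<bullet> (transpose A *v (A *v z)) = 0"
    using z[of "transpose A *v (A *v z)"] by (auto simp: orthogonal_def span_base)
  moreover have "((A *v z) v* A) \<bullet> z = (A *v z) \<bullet> (A *v z)" by (rule dot_lmul_matrix)
  ultimately have "(A *v z) \<bullet> (A *v z) = 0"
    by (simp add: inner_commute)
  then have Az: "A *v z = 0" by simp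
  have "w \<bullet> z = 0" using assms Az by blast
  moreover have "a \<bullet> z = 0" using z[OF a] by (simp add: orthogonal_def inner_commute)
  ultimately have "z \<bullet> z = 0" using w by (simp add: inner_add_left)
  then have "z = 0" by simp
  then show ?thesis using aS w by auto
qed

lemma kkt:
  fixes A :: "real ^ 'n ^ 'm"
  assumes p: "p > 1" and opt: "\<forall>z. A *v z = A *v x \<longrightarrow> FF p x \<le> FF p z"
  shows "\<exists>l. \<forall>j. sp (p - 1) (x $ j) = (\<Sum>k\<in>UNIV. l $ k * A $ k $ j)"
proof -
  let ?w = "\<chi> j. sp (p - 1) (x $ j)"
  have "\<forall>v. A *v v = 0 \<longrightarrow> ?w \<bullet> v = 0"
    using first_order[OF p opt] by (simp add: inner_vec_def)
  from kkt_range[OF this] obtain l where "?w = transpose A *v l" by blast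
  then have "\<forall>j. ?w $ j = (l v* A) $ j" by simp
  then have "\<forall>j. sp (p - 1) (x $ j) = (\<Sum>k\<in>UNIV. l $ k * A $ k $ j)"
    by (simp add: vector_matrix_mult_def)
  then show ?thesis by blast
qed

lemma unique_opt:
  fixes A :: "real ^ 'n ^ 'm"
  assumes p: "p > 1"
    and ox: "\<forall>z. A *v z = A *v x \<longrightarrow> FF p x \<le> FF p z"
    and oz: "\<forall>w. A *v w = A *v z \<longrightarrow> FF p z \<le> FF p w"
    and eq: "A *v z = A *v x"
  shows "z = x"
proof -
  have k: "A *v (z - x) = 0" "A *v (x - z) = 0" using eq by (auto simp: matrix_vector_mult_diff_distrib)
  have 1: "(\<Sum>j\<in>UNIV. sp (p - 1) (x $ j) * (z - x) $ j) = 0" by (rule first_order[OF p ox k(1)])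
  have 2: "(\<Sum>j\<in>UNIV. sp (p - 1) (z $ j) * (x - z) $ j) = 0" by (rule first_order[OF p oz k(2)])
  have "(\<Sum>j\<in>UNIV. (sp (p - 1) (z $ j) - sp (p - 1) (x $ j)) * (z $ j - x $ j)) = 0"
  proof -
    have "\<And>j. (sp (p - 1) (z $ j) - sp (p - 1) (x $ j)) * (z $ j - x $ j)
       = - (sp (p - 1) (x $ j) * (z - x) $ j) - sp (p - 1) (z $ j) * (x - z) $ j"
      by (simp add: algebra_simps)
    then have "(\<Sum>j\<in>UNIV. (sp (p - 1) (z $ j) - sp (p - 1) (x $ j)) * (z $ j - x $ j))
      = (\<Sum>j\<in>UNIV. - (sp (p - 1) (x $ j) * (z - x) $ j) - sp (p - 1) (z $ j) * (x - z) $ j)"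
      by (rule sum.cong[OF refl])
    also have "\<dots> = - (\<Sum>j\<in>UNIV. sp (p - 1) (x $ j) * (z - x) $ j) - (\<Sum>j\<in>UNIV. sp (p - 1) (z $ j) * (x - z) $ j)"
      by (simp only: sum_subtractf sum_negf)
    finally show ?thesis using 1 2 by simp
  qed
  moreover have nn: "\<And>j. (sp (p - 1) (z $ j) - sp (p - 1) (x $ j)) * (z $ j - x $ j) \<ge> 0"
    by (rule sp_mono_prod) (use p in simp)
  ultimately have "\<forall>j\<in>UNIV. (sp (p - 1) (z $ j) - sp (p - 1) (x $ j)) * (z $ j - x $ j) = 0"
    by (intro sum_nonneg_eq_0_iff[THEN iffD1]) (auto intro: nn)
  then have "\<forall>j. z $ j = x $ j"
  proof (intro allI)
    fix j
    have "(sp (p - 1) (z $ j) - sp (p - 1) (x $ j)) * (z $ j - x $ j) = 0"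
      using \<open>\<forall>j\<in>UNIV. _\<close> by blast
    then show "z $ j = x $ j" by (rule sp_mono_prod_eq[rotated]) (use p in simp)
  qed
  then show ?thesis by (simp add: vec_eq_iff)
qed

lemma cont_FF: "p > 0 \<Longrightarrow> continuous_on S (FF p)"
  unfolding FF_def by (intro continuous_intros continuous_on_powr') auto

lemma exists_opt:
  fixes A :: "real ^ 'n ^ 'm"
  assumes p: "p > 0" and x0: "A *v x0 = y"
  shows "\<exists>x. A *v x = y \<and> (\<forall>z. A *v z = y \<longrightarrow> FF p x \<le> FF p z)"
proof -
  let ?K = "{x. A *v x = y \<and> FF p x \<le> FF p x0}"
  have c1: "closed {x. A *v x = y}"
    by (rule closed_Collect_eq) (auto intro: continuous_intros)
  have c2: "closed {x. FF p x \<le> FF p x0}"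
    by (rule closed_Collect_le) (auto intro: cont_FF p continuous_on_const)
  have "?K = {x. A *v x = y} \<inter> {x. FF p x \<le> FF p x0}" by auto
  then have cl: "closed ?K" using closed_Int[OF c1 c2] by simp
  have bd: "bounded ?K"
    unfolding Elementary_Metric_Spaces.bounded_iff
  proof (intro exI ballI)
    fix x assume "x \<in> ?K"
    then have le: "FF p x \<le> FF p x0" by simp
    have ci: "\<bar>x $ i\<bar> \<le> FF p x0 powr (1/p)" for i
    proof -
      have "\<bar>x $ i\<bar> powr p \<le> FF p x"
        unfolding FF_def by (rule member_le_sum) auto
      then have "\<bar>x $ i\<bar> powr p \<le> FF p x0" using le by linarith
      then have "(\<bar>x $ i\<bar> powr p) powr (1/p) \<le> FF p x0 powr (1/p)"
        using p by (intro powr_mono2) auto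
      then show ?thesis using p by (simp add: powr_powr)
    qed
    have "norm x \<le> (\<Sum>i\<in>UNIV. \<bar>x $ i\<bar>)" by (rule norm_le_l1_cart)
    also have "\<dots> \<le> (\<Sum>i\<in>(UNIV::'n set). FF p x0 powr (1/p))" by (intro sum_mono ci)
    finally show "norm x \<le> real CARD('n) * FF p x0 powr (1/p)" by simp
  qed
  have cK: "compact ?K" using cl bd by (simp add: compact_eq_bounded_closed)
  have ne: "?K \<noteq> {}" using x0 by auto
  have "\<exists>x\<in>?K. \<forall>z\<in>?K. FF p x \<le> FF p z"
    by (rule continuous_attains_inf[OF cK ne cont_FF[OF p]])
  then obtain x where x: "x \<in> ?K" and m: "\<forall>z\<in>?K. FF p x \<le> FF p z"
    by blast
  show ?thesis
  proof (intro exI conjI allI impI)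
    show "A *v x = y" using x by simp
    fix z assume z: "A *v z = y"
    show "FF p x \<le> FF p z"
    proof (cases "FF p z \<le> FF p x0")
      case True
      then show ?thesis using m z by simp
    next
      case False
      then show ?thesis using x by simp
    qed
  qed
qed

lemma vec_lambda_sum_axis: "(\<chi> l. f l) = (\<Sum>l\<in>UNIV. axis l (f l :: 'b::real_normed_vector))"
  by (simp add: vec_eq_iff axis_def sum_component if_distrib cong: if_cong)

lemma linear_axis: "linear (axis l :: 'b::euclidean_space \<Rightarrow> 'b ^ 'l)"
  by (rule linearI) (auto simp: vec_eq_iff axis_def)

lemma d_vec:
  assumes "\<And>l. f l differentiable (at w)"
  shows "(\<lambda>z. (\<chi> l. f l z) :: 'b::euclidean_space ^ 'l) differentiable (at w)"
proof -
  have "(\<lambda>z. (\<chi> l. f l z) :: 'b ^ 'l) = (\<lambda>z. \<Sum>l\<in>UNIV. axis l (f l z))"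
    by (rule ext) (rule vec_lambda_sum_axis)
  moreover have "(\<lambda>z. \<Sum>l\<in>UNIV. (axis l (f l z) :: 'b ^ 'l)) differentiable (at w)"
  proof (intro differentiable_sum ballI finite)
    fix l
    have "(axis l :: 'b \<Rightarrow> 'b ^ 'l) differentiable (at (f l w))"
      by (rule bounded_linear_imp_differentiable) (simp add: linear_axis flip: linear_conv_bounded_linear)
    then show "(\<lambda>z. (axis l (f l z) :: 'b ^ 'l)) differentiable (at w)"
      by (rule differentiable_compose[OF _ assms])
  qed
  ultimately show ?thesis by simp
qed

lemma d_cB: "(\<lambda>z. fst z $ l $ j :: real) differentiable (at w)"
  by (rule bounded_linear_imp_differentiable)
     (intro bounded_linear_compose[OF bounded_linear_vec_nth] bounded_linear_fst)

lemma d_cL: "(\<lambda>z. snd z $ l :: real) differentiable (at w)"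
  by (rule bounded_linear_imp_differentiable)
     (intro bounded_linear_compose[OF bounded_linear_vec_nth] bounded_linear_snd)

lemma sp_differentiable: "b \<ge> 1 \<Longrightarrow> sp b differentiable (at u)"
  using sp_deriv[of b u] unfolding differentiable_def has_field_derivative_def by blast

lemma d_sp:
  assumes "b \<ge> 1" "f differentiable (at w)"
  shows "(\<lambda>z. sp b (f z)) differentiable (at w)"
  by (rule differentiable_compose[OF sp_differentiable[OF assms(1)] assms(2)])

definition Aent :: "real \<Rightarrow> 'm \<Rightarrow> real ^ 'n ^ 'm \<Rightarrow> real ^ 'm \<Rightarrow> 'm \<Rightarrow> 'n \<Rightarrow> real" where
  "Aent b k B lam l j = (if l = k then (sp b (B $ k $ j) - (\<Sum>l'\<in>UNIV - {k}. B $ l' $ j * lam $ l')) / lam $ k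
                        else B $ l $ j)"

definition chartX :: "real \<Rightarrow> real \<Rightarrow> 'm \<Rightarrow> (real ^ 'n ^ 'm) \<times> (real ^ 'm) \<Rightarrow> (real ^ 'n ^ 'm) \<times> (real ^ 'm)" where
  "chartX a b k z = ((\<chi> l j. Aent b k (fst z) (snd z) l j),
                     (\<chi> l. \<Sum>j\<in>UNIV. Aent b k (fst z) (snd z) l j * sp a (fst z $ k $ j)))"

lemma d_Aent:
  assumes "b \<ge> 1" "snd w $ k \<noteq> 0"
  shows "(\<lambda>z. Aent b k (fst z) (snd z) l j) differentiable (at w)"
proof (cases "l = k")
  case True
  have "(\<lambda>z. (sp b (fst z $ k $ j) - (\<Sum>l'\<in>UNIV - {k}. fst z $ l' $ j * snd z $ l')) / snd z $ k)
        differentiable (at w)"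
    using assms by (intro differentiable_divide differentiable_diff differentiable_sum d_sp
        differentiable_mult d_cB d_cL ballI finite_Diff finite) auto
  then show ?thesis using True by (simp add: Aent_def)
next
  case False
  then show ?thesis by (simp add: Aent_def d_cB)
qed

lemma chartX_diff:
  fixes k :: "'m::finite"
  assumes "a \<ge> 1" "b \<ge> 1"
  shows "(chartX a b k :: (real ^ 'n::finite ^ 'm) \<times> (real ^ 'm) \<Rightarrow> _) differentiable_on {z. snd z $ k \<noteq> 0}"
proof (rule differentiable_at_imp_differentiable_on)
  fix w :: "(real ^ 'n ^ 'm) \<times> (real ^ 'm)" assume "w \<in> {z. snd z $ k \<noteq> 0}"
  then have w: "snd w $ k \<noteq> 0" by simp
  have inner: "(\<lambda>z. (\<chi> j. Aent b k (fst z) (snd z) l j) :: real ^ 'n) differentiable (at w)" for l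
    by (rule d_vec[of "\<lambda>j z. Aent b k (fst z) (snd z) l j"]) (rule d_Aent[OF assms(2) w])
  have outer: "(\<lambda>z. (\<chi> l j. Aent b k (fst z) (snd z) l j) :: real ^ 'n ^ 'm) differentiable (at w)"
    by (rule d_vec[of "\<lambda>l z. (\<chi> j. Aent b k (fst z) (snd z) l j)"]) (rule inner)
  show "chartX a b k differentiable (at w)"
    unfolding chartX_def
    apply (rule differentiable_Pair[OF outer])
    by (intro differentiable_Pair d_vec differentiable_sum differentiable_mult d_Aent d_sp d_cB
        assms w ballI finite)
qed

lemma negligible_coord:
  fixes k :: "'m::finite" and i :: "'n::finite"
  shows "negligible {z :: (real ^ 'n ^ 'm) \<times> (real ^ 'm). fst z $ k $ i = 0}"
proof -
  let ?e = "((\<chi> l j. if l = k \<and> j = i then 1 else 0) :: real ^ 'n ^ 'm, 0 :: real ^ 'm)"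
  have "?e \<noteq> 0"
  proof
    assume "?e = 0"
    then have "fst ?e $ k $ i = 0" by simp
    then show False by simp
  qed
  moreover have "?e \<bullet> z = fst z $ k $ i" for z :: "(real ^ 'n ^ 'm) \<times> (real ^ 'm)"
  proof -
    have "?e \<bullet> z = (\<Sum>l\<in>UNIV. \<Sum>j\<in>UNIV. (if l = k \<and> j = i then 1 else 0) * (fst z $ l $ j))"
      by (cases z) (simp add: inner_vec_def)
    also have "\<dots> = (\<Sum>l\<in>UNIV. if l = k then fst z $ l $ i else 0)"
      by (intro sum.cong refl) (auto simp: if_distrib[of "\<lambda>x. x * _"] sum.delta' cong: if_cong)
    also have "\<dots> = fst z $ k $ i" by simp
    finally show ?thesis .
  qed
  ultimately show ?thesis
    using negligible_hyperplane[of ?e 0] by simp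
qed

lemma negligible_chartX:
  fixes k :: "'m::finite" and i :: "'n::finite"
  assumes "a \<ge> 1" "b \<ge> 1"
  shows "negligible (chartX a b k ` {z :: (real ^ 'n ^ 'm) \<times> (real ^ 'm). fst z $ k $ i = 0 \<and> snd z $ k \<noteq> 0})"
proof (rule negligible_differentiable_image_negligible)
  show "negligible {z :: (real ^ 'n ^ 'm) \<times> (real ^ 'm). fst z $ k $ i = 0 \<and> snd z $ k \<noteq> 0}"
    by (rule negligible_subset[OF negligible_coord[of k i]]) auto
  show "chartX a b k differentiable_on {z :: (real ^ 'n ^ 'm) \<times> (real ^ 'm). fst z $ k $ i = 0 \<and> snd z $ k \<noteq> 0}"
    by (rule differentiable_on_subset[OF chartX_diff[OF assms]]) auto
qed simp

definition chartR :: "('m \<Rightarrow> 'n) \<Rightarrow> 'm \<Rightarrow> (real ^ 'n ^ 'm) \<times> (real ^ 'm) \<Rightarrow> (real ^ 'n ^ 'm) \<times> (real ^ 'm)" where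
  "chartR g k z = ((\<chi> l j. if l = k then - (\<Sum>l'\<in>UNIV - {k}. fst z $ k $ g l' * fst z $ l' $ j) else fst z $ l $ j),
                   snd z)"

lemma negligible_chartR:
  fixes k :: "'m::finite" and g :: "'m \<Rightarrow> 'n::finite"
  shows "negligible (chartR g k ` {z :: (real ^ 'n ^ 'm) \<times> (real ^ 'm). fst z $ k $ g k = 0})"
proof (rule negligible_differentiable_image_negligible)
  show "negligible {z :: (real ^ 'n ^ 'm) \<times> (real ^ 'm). fst z $ k $ g k = 0}"
    by (rule negligible_coord)
  show "chartR g k differentiable_on {z :: (real ^ 'n ^ 'm) \<times> (real ^ 'm). fst z $ k $ g k = 0}"
  proof (rule differentiable_at_imp_differentiable_on)
    fix w :: "(real ^ 'n ^ 'm) \<times> (real ^ 'm)"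
    have e: "(\<lambda>z. (if l = k then - (\<Sum>l'\<in>UNIV - {k}. fst z $ k $ g l' * fst z $ l' $ j) else fst z $ l $ j))
        differentiable (at w)" for l j
      by (cases "l = k") (auto intro!: differentiable_minus differentiable_sum differentiable_mult d_cB)
    have inner: "(\<lambda>z. (\<chi> j. (if l = k then - (\<Sum>l'\<in>UNIV - {k}. fst z $ k $ g l' * fst z $ l' $ j) else fst z $ l $ j)) :: real ^ 'n) differentiable (at w)" for l
      by (rule d_vec[of "\<lambda>j z. (if l = k then - (\<Sum>l'\<in>UNIV - {k}. fst z $ k $ g l' * fst z $ l' $ j) else fst z $ l $ j)"]) (rule e)
    have outer: "(\<lambda>z. (\<chi> l j. (if l = k then - (\<Sum>l'\<in>UNIV - {k}. fst z $ k $ g l' * fst z $ l' $ j) else fst z $ l $ j)) :: real ^ 'n ^ 'm) differentiable (at w)"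
      by (rule d_vec[of "\<lambda>l z. (\<chi> j. (if l = k then - (\<Sum>l'\<in>UNIV - {k}. fst z $ k $ g l' * fst z $ l' $ j) else fst z $ l $ j))"]) (rule inner)
    show "chartR g k differentiable (at w)"
      unfolding chartR_def
      by (rule differentiable_Pair[OF outer]) (rule bounded_linear_imp_differentiable[OF bounded_linear_snd])
  qed
qed simp

lemma sum_split_k:
  fixes f :: "'m::finite \<Rightarrow> real"
  shows "(\<Sum>l\<in>UNIV. f l) = f k + (\<Sum>l\<in>UNIV - {k}. f l)"
  by (simp add: sum.remove[of UNIV k])

lemma coverX:
  fixes A :: "real ^ 'n::finite ^ 'm::finite" and x :: "real ^ 'n" and lam :: "real ^ 'm"
  assumes a: "a > 0" and b: "b = a * (p - 1)" and xi: "x $ i = 0" and lk: "lam $ k \<noteq> 0"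
    and rel: "\<forall>j. sp (p - 1) (x $ j) = (\<Sum>l\<in>UNIV. lam $ l * A $ l $ j)"
  shows "(A, A *v x) \<in> chartX a b k ` {z. fst z $ k $ i = 0 \<and> snd z $ k \<noteq> 0}"
proof -
  let ?B = "(\<chi> l j. if l = k then sp (1/a) (x $ j) else A $ l $ j) :: real ^ 'n ^ 'm"
  have sp1: "sp b (sp (1/a) u) = sp (p - 1) u" for u
    using a by (simp add: sp_sp b)
  have sp2: "sp a (sp (1/a) u) = u" for u
    using a by (simp add: sp_sp sp_1)
  have ent: "Aent b k ?B lam l j = A $ l $ j" for l j
  proof (cases "l = k")
    case True
    have s: "(\<Sum>l'\<in>UNIV - {k}. ?B $ l' $ j * lam $ l') = (\<Sum>l'\<in>UNIV - {k}. lam $ l' * A $ l' $ j)"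
      by (intro sum.cong refl) auto
    have "sp (p - 1) (x $ j) = lam $ k * A $ k $ j + (\<Sum>l'\<in>UNIV - {k}. lam $ l' * A $ l' $ j)"
      using rel sum_split_k[of "\<lambda>l. lam $ l * A $ l $ j" k] by simp
    then show ?thesis using True lk unfolding Aent_def s
      by (simp add: sp1 field_simps)
  next
    case False
    then show ?thesis by (simp add: Aent_def)
  qed
  have c1: "chartX a b k (?B, lam) = (A, A *v x)"
    unfolding chartX_def by (simp add: ent sp2 vec_eq_iff matrix_vector_mult_def)
  have c2: "(?B, lam) \<in> {z. fst z $ k $ i = 0 \<and> snd z $ k \<noteq> 0}"
    using xi lk by simp
  show ?thesis using image_eqI[where f="chartX a b k", OF c1[symmetric] c2] .
qed

lemma coverR:
  fixes A :: "real ^ 'n::finite ^ 'm::finite" and lam :: "real ^ 'm" and g :: "'m \<Rightarrow> 'n"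
  assumes g: "inj g" and lk: "lam $ k \<noteq> 0"
    and rel: "\<forall>j. (\<Sum>l\<in>UNIV. lam $ l * A $ l $ j) = 0"
  shows "(A, y) \<in> chartR g k ` {z. fst z $ k $ g k = 0}"
proof -
  let ?B = "(\<chi> l j. if l = k then (if j \<in> range g \<and> inv g j \<noteq> k then lam $ (inv g j) / lam $ k else 0)
              else A $ l $ j) :: real ^ 'n ^ 'm"
  have Bk: "?B $ k $ g l' = (if l' = k then 0 else lam $ l' / lam $ k)" for l'
    using g by (simp add: inv_f_f)
  have row: "- (\<Sum>l'\<in>UNIV - {k}. ?B $ k $ g l' * ?B $ l' $ j) = A $ k $ j" for j
  proof -
    have s: "(\<Sum>l'\<in>UNIV - {k}. ?B $ k $ g l' * ?B $ l' $ j) = (\<Sum>l'\<in>UNIV - {k}. lam $ l' * A $ l' $ j) / lam $ k"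
      unfolding sum_divide_distrib
    proof (intro sum.cong refl)
      fix l' assume l': "l' \<in> UNIV - {k}"
      have r: "?B $ l' $ j = A $ l' $ j" using l' by simp
      show "?B $ k $ g l' * ?B $ l' $ j = lam $ l' * A $ l' $ j / lam $ k"
        unfolding Bk r using l' by simp
    qed
    have "lam $ k * A $ k $ j + (\<Sum>l'\<in>UNIV - {k}. lam $ l' * A $ l' $ j) = 0"
      using rel sum_split_k[of "\<lambda>l. lam $ l * A $ l $ j" k] by simp
    then show ?thesis unfolding s using lk by (simp add: field_simps)
  qed
  have c1: "chartR g k (?B, y) = (A, y)"
    unfolding chartR_def using row by (simp add: vec_eq_iff)
  have c2: "(?B, y) \<in> {z. fst z $ k $ g k = 0}"
    using g by (simp add: inv_f_f)
  show ?thesis using image_eqI[where f="chartR g k", OF c1[symmetric] c2] .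
qed

lemma AE_lborel_from_negligible:
  assumes "negligible N" "\<And>x. x \<notin> N \<Longrightarrow> P x"
  shows "AE x in (lborel :: 'a::euclidean_space measure). P x"
proof -
  have "AE x in (lebesgue :: 'a measure). P x"
    unfolding eventually_ae_filter_negligible using assms by blast
  then show ?thesis by (simp add: AE_completion_iff)
qed

lemma negligible_snd0:
  "negligible {z :: (real ^ 'n::finite ^ 'm::finite) \<times> (real ^ 'm). snd z = 0}"
proof -
  obtain k0 :: 'm where True by blast
  let ?e = "(0 :: real ^ 'n ^ 'm, axis k0 (1::real))"
  have "?e \<noteq> 0" by (simp add: axis_eq_0_iff zero_prod_def)
  moreover have "?e \<bullet> z = snd z $ k0" for z :: "(real ^ 'n ^ 'm) \<times> (real ^ 'm)"
    by (cases z) (simp add: inner_axis')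
  ultimately have "negligible {z :: (real ^ 'n ^ 'm) \<times> (real ^ 'm). snd z $ k0 = 0}"
    using negligible_hyperplane[of ?e 0] by simp
  then show ?thesis by (rule negligible_subset) auto
qed

theorem theorem4p1:
  fixes p :: real
  assumes "p > 1"
    and "CARD('n::finite) \<ge> 2 * CARD('m::finite) - 1"
  shows "AE Ay in (lborel :: ((real ^ 'n ^ 'm) \<times> (real ^ 'm)) measure).
           (\<exists>!x. lp_optimal p (fst Ay) (snd Ay) x) \<and>
           (\<forall>x. lp_optimal p (fst Ay) (snd Ay) x \<longrightarrow> card (supp x) = CARD('n))"
proof -
  have p: "p > 1" by fact
  have p0: "p > 0" using p by simp
  have "CARD('m) \<ge> 1" by (simp add: Suc_leI)
  then have cmn: "CARD('m) \<le> CARD('n)" using assms(2) by linarith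
  obtain g :: "'m \<Rightarrow> 'n" where g: "inj g"
    using card_le_inj[of "UNIV :: 'm set" "UNIV :: 'n set"] cmn by auto
  define a where "a = max 1 (1 / (p - 1))"
  define b where "b = a * (p - 1)"
  have a1: "a \<ge> 1" by (simp add: a_def)
  have a0: "a > 0" using a1 by simp
  have b1: "b \<ge> 1"
  proof (cases "p - 1 \<ge> 1")
    case True
    then have "1 * 1 \<le> a * (p - 1)" using a1 by (intro mult_mono) auto
    then show ?thesis by (simp add: b_def)
  next
    case False
    have "a \<ge> 1 / (p - 1)" by (simp add: a_def)
    then have "a * (p - 1) \<ge> 1 / (p - 1) * (p - 1)" using p by (intro mult_right_mono) auto
    then show ?thesis using p by (simp add: b_def)
  qed
  define N0 where "N0 = {z :: (real ^ 'n ^ 'm) \<times> (real ^ 'm). snd z = 0}"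
  define NR where "NR = (\<Union>k. chartR g k ` {z :: (real ^ 'n ^ 'm) \<times> (real ^ 'm). fst z $ k $ g k = 0})"
  define NX where "NX = (\<Union>i. \<Union>k. chartX a b k ` {z :: (real ^ 'n ^ 'm) \<times> (real ^ 'm). fst z $ k $ i = 0 \<and> snd z $ k \<noteq> 0})"
  have nN0: "negligible N0" unfolding N0_def by (rule negligible_snd0)
  have nNR: "negligible NR" unfolding NR_def
    by (intro negligible_Union finite_imageI finite) (auto intro: negligible_chartR)
  have nNX: "negligible NX" unfolding NX_def
    by (intro negligible_Union finite_imageI finite) (auto intro!: negligible_Union finite_imageI negligible_chartX a1 b1)
  show ?thesis
  proof (rule AE_lborel_from_negligible[of "N0 \<union> NR \<union> NX"])
    show "negligible (N0 \<union> NR \<union> NX)" using nN0 nNR nNX by simp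
  next
    fix z :: "(real ^ 'n ^ 'm) \<times> (real ^ 'm)"
    assume z: "z \<notin> N0 \<union> NR \<union> NX"
    obtain A y where zAy: "z = (A, y)" by (cases z)
    have y0: "y \<noteq> 0" using z zAy by (auto simp: N0_def)
    \<comment> \<open>feasibility\<close>
    have feas: "\<exists>x0. A *v x0 = y"
    proof (rule ccontr)
      assume nf: "\<not> (\<exists>x0. A *v x0 = y)"
      let ?S = "range ((*v) A)"
      have sub: "subspace ?S"
        by (rule linear_subspace_image[OF matrix_vector_mul_linear subspace_UNIV])
      have sS: "span ?S = ?S" using span_eq_iff[THEN iffD2, OF sub] .
      have "span ?S \<noteq> UNIV"
      proof
        assume "span ?S = UNIV"
        then have "y \<in> ?S" using sS by (metis UNIV_I)
        then show False using nf by auto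
      qed
      then have "dim ?S \<noteq> DIM(real ^ 'm)" using dim_eq_full by blast
      moreover have "dim ?S \<le> DIM(real ^ 'm)" by (rule dim_subset_UNIV)
      ultimately have "dim ?S < DIM(real ^ 'm)" by simp
      then obtain lam :: "real ^ 'm" where l0: "lam \<noteq> 0" and orth: "\<And>u. u \<in> span ?S \<Longrightarrow> orthogonal lam u"
        using orthogonal_to_subspace_exists[OF \<open>dim ?S < DIM(real ^ 'm)\<close>] by blast
      have "lam \<bullet> (A *v (lam v* A)) = 0"
        using orth[of "A *v (lam v* A)"] by (auto simp: orthogonal_def span_base)
      then have "(lam v* A) \<bullet> (lam v* A) = 0" by (simp add: dot_lmul_matrix)
      then have "lam v* A = 0" by simp
      then have rel: "\<forall>j. (\<Sum>l\<in>UNIV. lam $ l * A $ l $ j) = 0"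
        by (auto simp: vec_eq_iff vector_matrix_mult_def mult.commute)
      obtain k where lk: "lam $ k \<noteq> 0" using l0 by (auto simp: vec_eq_iff)
      have "(A, y) \<in> NR" unfolding NR_def using coverR[OF g lk rel, of y] by blast
      then show False using z zAy by auto
    qed
    then obtain x0 where x0: "A *v x0 = y" by blast
    obtain x where xo: "A *v x = y" and xm: "\<forall>z. A *v z = y \<longrightarrow> FF p x \<le> FF p z"
      using exists_opt[OF p0 x0] by blast
    have optx: "lp_optimal p A y x" using lp_optimal_iff[OF p0] xo xm by blast
    have uniq: "x' = x" if "lp_optimal p A y x'" for x'
    proof -
      have 1: "A *v x' = y" "\<forall>w. A *v w = y \<longrightarrow> FF p x' \<le> FF p w"
        using that lp_optimal_iff[OF p0] by blast+
      show "x' = x"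
        by (rule unique_opt[OF p _ _ ]) (use 1 xo xm in auto)
    qed
    have full: "card (supp x') = CARD('n)" if "lp_optimal p A y x'" for x'
    proof -
      have x': "x' = x" using uniq that by blast
      have nz: "x $ i \<noteq> 0" for i
      proof
        assume xi: "x $ i = 0"
        have "\<forall>w. A *v w = A *v x \<longrightarrow> FF p x \<le> FF p w" using xm xo by simp
        from kkt[OF p this] obtain l where rel: "\<forall>j. sp (p - 1) (x $ j) = (\<Sum>k\<in>UNIV. l $ k * A $ k $ j)"
          by blast
        show False
        proof (cases "l = 0")
          case True
          then have "\<forall>j. sp (p - 1) (x $ j) = 0" using rel by simp
          then have "x = 0" by (simp add: sp_eq0 vec_eq_iff)
          then show False using xo y0 by simp
        next
          case False
          then obtain k where lk: "l $ k \<noteq> 0" by (auto simp: vec_eq_iff)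
          have "(A, A *v x) \<in> chartX a b k ` {z. fst z $ k $ i = 0 \<and> snd z $ k \<noteq> 0}"
            by (rule coverX[OF a0 b_def xi lk rel])
          then have "(A, y) \<in> NX" unfolding NX_def using xo by blast
          then show False using z zAy by auto
        qed
      qed
      have "supp x' = UNIV" using nz x' by (auto simp: supp_def)
      then show ?thesis by simp
    qed
    show "(\<exists>!x. lp_optimal p (fst z) (snd z) x) \<and>
          (\<forall>x. lp_optimal p (fst z) (snd z) x \<longrightarrow> card (supp x) = CARD('n))"
      using optx uniq full zAy by auto
  qed
qed

end
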